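(* Let $p$ be an odd prime, $n\ge1$, $G=\mu_{p^n}$ and let $\mathcal{P}$ be a fusion partition of $G$ satisfying condition (p), with associated integers $b_0,\dots,b_n$ (where $u_k=\phi(p^{b_k})$ for $k<n$, and $b_n=0$). Then $b_{k+1}+k+1\ge b_k+k$ for all $0\le k\le n-1$.
   Context: A unital partition of a finite commutative group $G$ is a partition $G=\{1\}\sqcup A_0\sqcup\dots\sqcup A_s$ such that, with $a_i=\sum_{x\in A_i}x\in\mathbb{Z}[G]$, the $\mathbb{Z}$-span of $1$ and the $a_i$ is closed under multiplication. It is a fusion partition if moreover (1) the set of inverses of each member is a member, denoted $A_{i^*}$, and (2) writing $a_ia_j=\sum_kn^k_{i,j}a_k$, one has $n^k_{i,j}|A_k|=n^{j^*}_{i,k^*}|A_{j^*}|$. Condition (p): every member has cardinality a power of $p$. $B_k=\{x^{p^k}\mid x \text{ a generator of } G\}$, $\mathcal{P}_k=\{A\in\mathcal{P}\mid A\cap B_k\ne\emptyset\}$. Fix an integer $\alpha$ generating $(\mathbb{Z}/p^n\mathbb{Z})^\times$; for $A\in\mathcal{P}_k$, $y\in A\cap B_k$, $u_k$ is the smallest positive integer with $y^{\alpha^{u_k}}\in A$. Under (p), $u_k=\phi(p^{b_k})$ for a unique integer $1\le b_k\le n-k$ ($k<n$); set $b_n=0$. *)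

theory Defs
  imports "HOL-Number_Theory.Number_Theory"
begin

text \<open>The cyclic group mu_N (N = p^n) is modelled additively by exponents:
  x in {..<N} stands for zeta^x, zeta a primitive N-th root of unity.
  Elements of Z[G] are functions nat => int (only arguments < N matter).\<close>

definition ind :: "nat set \<Rightarrow> nat \<Rightarrow> int" where
  "ind A x = (if x \<in> A then 1 else 0)"

text \<open>Product in the group ring Z[G] (convolution).\<close>
definition cconv :: "nat \<Rightarrow> (nat \<Rightarrow> int) \<Rightarrow> (nat \<Rightarrow> int) \<Rightarrow> nat \<Rightarrow> int" where
  "cconv N a b x = (\<Sum>y<N. a y * b ((x + N - y) mod N))"

definition gneg :: "nat \<Rightarrow> nat \<Rightarrow> nat" where
  "gneg N x = (N - x) mod N"

definition is_partition_of :: "nat \<Rightarrow> nat set set \<Rightarrow> bool" where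
  "is_partition_of N P \<longleftrightarrow> (\<forall>A\<in>P. A \<noteq> {}) \<and> \<Union>P = {..<N} \<and>
     (\<forall>A\<in>P. \<forall>B\<in>P. A \<noteq> B \<longrightarrow> A \<inter> B = {})"

text \<open>Z-span of the a_C, C in P (this includes 1 = a_{{1}} since {1} is a member).\<close>
definition zspan :: "nat \<Rightarrow> nat set set \<Rightarrow> (nat \<Rightarrow> int) set" where
  "zspan N P = {f. \<exists>c :: nat set \<Rightarrow> int. \<forall>x<N. f x = (\<Sum>C\<in>P. c C * ind C x)}"

definition unital_partition :: "nat \<Rightarrow> nat set set \<Rightarrow> bool" where
  "unital_partition N P \<longleftrightarrow> is_partition_of N P \<and> {0} \<in> P \<and>
     (\<forall>f\<in>zspan N P. \<forall>g\<in>zspan N P. cconv N f g \<in> zspan N P)"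

text \<open>Structure constant n^C_{A,B}: coefficient of a_C in a_A a_B
  (for a unital partition this is the value of a_A a_B at any point of C).\<close>
definition struct_const :: "nat \<Rightarrow> nat set \<Rightarrow> nat set \<Rightarrow> nat set \<Rightarrow> int" where
  "struct_const N A B C = cconv N (ind A) (ind B) (SOME c. c \<in> C)"

definition fusion_partition :: "nat \<Rightarrow> nat set set \<Rightarrow> bool" where
  "fusion_partition N P \<longleftrightarrow> unital_partition N P \<and>
     (\<forall>A\<in>P. gneg N ` A \<in> P) \<and>
     (\<forall>A\<in>P. \<forall>B\<in>P. \<forall>C\<in>P.
        struct_const N A B C * int (card C) =
        struct_const N A (gneg N ` C) (gneg N ` B) * int (card (gneg N ` B)))"

definition cond_p :: "nat \<Rightarrow> nat set set \<Rightarrow> bool" where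
  "cond_p p P \<longleftrightarrow> (\<forall>A\<in>P. \<exists>e. card A = p ^ e)"

definition Bset :: "nat \<Rightarrow> nat \<Rightarrow> nat \<Rightarrow> nat set" where
  "Bset p n k = {(p ^ k * x) mod (p ^ n) | x. x < p ^ n \<and> coprime x (p ^ n)}"

definition Pset :: "nat \<Rightarrow> nat \<Rightarrow> nat set set \<Rightarrow> nat \<Rightarrow> nat set set" where
  "Pset p n P k = {A\<in>P. A \<inter> Bset p n k \<noteq> {}}"

definition uval :: "nat \<Rightarrow> nat \<Rightarrow> nat \<Rightarrow> nat set \<Rightarrow> nat \<Rightarrow> nat" where
  "uval p n \<alpha> A y = (LEAST u. 0 < u \<and> (\<alpha> ^ u * y) mod (p ^ n) \<in> A)"

end

theory Submission
  imports Defs "HOL-Computational_Algebra.Polynomial"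
begin

definition red :: "nat \<Rightarrow> int poly \<Rightarrow> nat \<Rightarrow> int" where
  "red N P z = (\<Sum>i\<le>degree P. if i mod N = z then coeff P i else 0)"

lemma red_bound:
  assumes "degree P \<le> M"
  shows "red N P z = (\<Sum>i\<le>M. if i mod N = z then coeff P i else 0)"
  unfolding red_def
proof (rule sum.mono_neutral_left)
  show "\<forall>i\<in>{..M} - {..degree P}. (if i mod N = z then coeff P i else 0) = 0"
    by (auto simp: coeff_eq_0)
qed (use assms in auto)

lemma red_add: "red N (P + Q) z = red N P z + red N Q z"
proof -
  define M where "M = max (degree P) (degree Q)"
  have "degree (P+Q) \<le> M" unfolding M_def by (rule degree_add_le) auto
  then have "red N (P+Q) z = (\<Sum>i\<le>M. if i mod N = z then coeff (P+Q) i else 0)" by (rule red_bound)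
  also have "\<dots> = (\<Sum>i\<le>M. if i mod N = z then coeff P i else 0) + (\<Sum>i\<le>M. if i mod N = z then coeff Q i else 0)"
    by (simp add: sum.distrib[symmetric] if_distrib cong: if_cong)
  also have "\<dots> = red N P z + red N Q z"
    by (subst (1 2) red_bound[where M=M]) (auto simp: M_def)
  finally show ?thesis .
qed

lemma red_0 [simp]: "red N 0 z = 0"
  unfolding red_def by (rule sum.neutral) simp

lemma red_sum: "red N (\<Sum>x\<in>A. F x) z = (\<Sum>x\<in>A. red N (F x) z)"
  by (induction A rule: infinite_finite_induct) (auto simp: red_add)

lemma red_smult: "red N (smult c P) z = c * red N P z"
proof -
  have "degree (smult c P) \<le> degree P" by (rule degree_smult_le)
  then have "red N (smult c P) z = (\<Sum>i\<le>degree P. if i mod N = z then coeff (smult c P) i else 0)"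
    by (rule red_bound)
  also have "\<dots> = c * red N P z" by (simp add: red_def sum_distrib_left if_distrib cong: if_cong)
  finally show ?thesis .
qed

lemma red_monom: "red N (monom c i) z = (if i mod N = z then c else 0)"
proof -
  have "red N (monom c i) z = (\<Sum>j\<le>i. if j mod N = z then coeff (monom c i) j else 0)"
    by (rule red_bound) (rule degree_monom_le)
  also have "\<dots> = (\<Sum>j\<in>{i}. if j mod N = z then coeff (monom c i) j else 0)"
    by (rule sum.mono_neutral_right) auto
  finally show ?thesis by simp
qed

lemma red_monom_mult:
  assumes "x < N" "z < N"
  shows "red N (monom 1 x * Q) z = red N Q ((z + N - x) mod N)"
proof -
  have "degree (monom 1 x * Q) \<le> x + degree Q"
    using degree_mult_le[of "monom (1::int) x" Q] degree_monom_le[of "1::int" x] by linarith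
  then have "red N (monom 1 x * Q) z = (\<Sum>i\<le>x + degree Q. if i mod N = z then coeff (monom 1 x * Q) i else 0)"
    by (rule red_bound)
  also have "\<dots> = (\<Sum>i\<in>(\<lambda>l. l + x) ` {..degree Q}. if i mod N = z then coeff (monom 1 x * Q) i else 0)"
  proof (rule sum.mono_neutral_right)
    show "(\<lambda>l. l + x) ` {..degree Q} \<subseteq> {..x + degree Q}" by auto
    show "\<forall>i\<in>{..x + degree Q} - (\<lambda>l. l + x) ` {..degree Q}.
      (if i mod N = z then coeff (monom 1 x * Q) i else 0) = 0"
    proof
      fix i assume i: "i \<in> {..x + degree Q} - (\<lambda>l. l + x) ` {..degree Q}"
      have "i < x"
      proof (rule ccontr)
        assume "\<not> i < x"
        then have "i = (i - x) + x" "i - x \<le> degree Q" using i by auto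
        then show False using i by (metis DiffD2 atMost_iff image_eqI)
      qed
      then show "(if i mod N = z then coeff (monom 1 x * Q) i else 0) = 0"
        by (simp add: coeff_monom_mult)
    qed
  qed auto
  also have "\<dots> = (\<Sum>l\<le>degree Q. if (l + x) mod N = z then coeff Q l else 0)"
  proof -
    have cm: "coeff (monom 1 x * Q) (l + x) = coeff Q l" for l
      by (simp only: coeff_monom_mult) simp
    show ?thesis
    proof (rule sum.reindex_cong[where l="\<lambda>l. l + x"])
      show "inj_on (\<lambda>l. l + x) {..degree Q}" by (auto simp: inj_on_def)
    next
      fix l show "(if (l + x) mod N = z then coeff (monom 1 x * Q) (l + x) else 0) =
        (if (l + x) mod N = z then coeff Q l else 0)" by (simp only: cm)
    qed simp
  qed
  also have "\<dots> = red N Q ((z + N - x) mod N)"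
    unfolding red_def
  proof (rule sum.cong[OF refl])
    fix l
    have "((l + x) mod N = z) \<longleftrightarrow> (l mod N = (z + N - x) mod N)"
    proof
      assume h: "(l + x) mod N = z"
      have "z + N - x = z + (N - x)" using assms(1) by simp
      then have "(z + N - x) mod N = ((l + x) mod N + (N - x)) mod N" using h by simp
      also have "\<dots> = (l + x + (N - x)) mod N" by (simp add: mod_add_left_eq)
      also have "l + x + (N - x) = l + N" using assms(1) by simp
      finally show "l mod N = (z + N - x) mod N" by simp
    next
      assume h: "l mod N = (z + N - x) mod N"
      have "(l + x) mod N = (l mod N + x) mod N" by (simp add: mod_add_left_eq)
      also have "\<dots> = ((z + N - x) mod N + x) mod N" using h by simp
      also have "\<dots> = (z + N - x + x) mod N" by (simp add: mod_add_left_eq)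
      also have "\<dots> = z" using assms by simp
      finally show "(l + x) mod N = z" .
    qed
    then show "(if (l + x) mod N = z then coeff Q l else 0) = (if l mod N = (z + N - x) mod N then coeff Q l else 0)"
      by simp
  qed
  finally show ?thesis .
qed


fun cpow :: "nat \<Rightarrow> (nat \<Rightarrow> int) \<Rightarrow> nat \<Rightarrow> nat \<Rightarrow> int" where
  "cpow N f 0 = ind {0}"
| "cpow N f (Suc i) = cconv N f (cpow N f i)"

definition Phi :: "nat set \<Rightarrow> int poly" where
  "Phi A = (\<Sum>x\<in>A. monom 1 x)"

lemma cconv_cong:
  assumes "N > 0" "\<And>x. x < N \<Longrightarrow> g x = g' x"
  shows "cconv N f g z = cconv N f g' z"
  unfolding cconv_def using assms by (intro sum.cong) auto

lemma sum_ind: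
  assumes "A \<subseteq> {..<N}"
  shows "(\<Sum>y<N. ind A y * g y) = (\<Sum>y\<in>A. g y)"
proof -
  have "(\<Sum>y<N. ind A y * g y) = (\<Sum>y\<in>A. ind A y * g y)"
    by (rule sum.mono_neutral_right) (use assms in \<open>auto simp: ind_def\<close>)
  also have "\<dots> = (\<Sum>y\<in>A. g y)" by (rule sum.cong) (auto simp: ind_def)
  finally show ?thesis .
qed

lemma red_Phi_mult:
  assumes "A \<subseteq> {..<N}" "z < N"
  shows "red N (Phi A * Q) z = cconv N (ind A) (red N Q) z"
proof -
  have "red N (Phi A * Q) z = (\<Sum>x\<in>A. red N (monom 1 x * Q) z)"
    by (simp add: Phi_def sum_distrib_right red_sum)
  also have "\<dots> = (\<Sum>x\<in>A. red N Q ((z + N - x) mod N))"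
    using assms by (intro sum.cong refl red_monom_mult) auto
  also have "\<dots> = cconv N (ind A) (red N Q) z"
    unfolding cconv_def by (rule sum_ind[symmetric]) (rule assms)
  finally show ?thesis .
qed

lemma cpow_red:
  assumes "A \<subseteq> {..<N}" "N > 0"
  shows "z < N \<Longrightarrow> cpow N (ind A) i z = red N (Phi A ^ i) z"
proof (induction i arbitrary: z)
  case 0
  have "red N (Phi A ^ 0) z = red N (monom 1 0) z" by simp
  also have "\<dots> = (if 0 mod N = z then 1 else 0)" by (rule red_monom)
  also have "\<dots> = ind {0} z" using 0 by (auto simp: ind_def)
  finally show ?case by simp
next
  case (Suc i)
  have "cpow N (ind A) (Suc i) z = cconv N (ind A) (cpow N (ind A) i) z" by simp
  also have "\<dots> = cconv N (ind A) (red N (Phi A ^ i)) z"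
    by (rule cconv_cong[OF assms(2)]) (rule Suc.IH)
  also have "\<dots> = red N (Phi A * Phi A ^ i) z"
    using red_Phi_mult[OF assms(1) Suc.prems] by simp
  finally show ?case by simp
qed

lemma frob2:
  assumes "prime q"
  shows "\<exists>r. (a + b) ^ q = a ^ q + b ^ q + of_nat q * (r::'a::comm_ring_1)"
proof -
  obtain m where qm: "q = Suc m" using assms by (cases q) auto
  have m0: "m > 0" using assms qm by (cases m) auto
  define f where "f k = of_nat (q choose k) * a ^ k * b ^ (q - k)" for k
  define r where "r = (\<Sum>i<m. of_nat ((q choose Suc i) div q) * a ^ Suc i * b ^ (q - Suc i) :: 'a)"
  have "(a + b) ^ q = (\<Sum>k\<le>Suc m. f k)" unfolding f_def qm by (rule binomial_ring)
  also have "\<dots> = f 0 + (\<Sum>i\<le>m. f (Suc i))" by (rule sum.atMost_Suc_shift)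
  also have "(\<Sum>i\<le>m. f (Suc i)) = (\<Sum>i<m. f (Suc i)) + f (Suc m)"
    by (simp only: lessThan_Suc_atMost[symmetric] sum.lessThan_Suc)
  also have "(\<Sum>i<m. f (Suc i)) = of_nat q * r"
    unfolding r_def sum_distrib_left
  proof (rule sum.cong[OF refl])
    fix i assume "i \<in> {..<m}"
    then have "q dvd (q choose Suc i)" using assms qm by (intro dvd_choose_prime) auto
    then have "q choose Suc i = q * ((q choose Suc i) div q)" by simp
    then have "(of_nat (q choose Suc i) :: 'a) = of_nat q * of_nat ((q choose Suc i) div q)"
      by (metis of_nat_mult)
    then show "f (Suc i) = of_nat q * (of_nat ((q choose Suc i) div q) * a ^ Suc i * b ^ (q - Suc i))"
      unfolding f_def by (simp add: mult.assoc)
  qed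
  finally show ?thesis unfolding f_def qm by (auto simp: algebra_simps)
qed

lemma frob_sum:
  assumes "prime q" "finite A"
  shows "\<exists>r. (\<Sum>x\<in>A. f x) ^ q = (\<Sum>x\<in>A. f x ^ q) + of_nat q * (r::'a::comm_ring_1)"
  using assms(2)
proof (induction A rule: finite_induct)
  case empty
  have "q > 0" using assms prime_gt_0_nat by blast
  then show ?case by (intro exI[of _ 0]) (simp add: power_0_left)
next
  case (insert x F)
  obtain r1 where r1: "(\<Sum>x\<in>F. f x) ^ q = (\<Sum>x\<in>F. f x ^ q) + of_nat q * r1" using insert by blast
  obtain r2 where r2: "(f x + (\<Sum>x\<in>F. f x)) ^ q = f x ^ q + (\<Sum>x\<in>F. f x) ^ q + of_nat q * r2"
    using frob2[OF assms(1)] by blast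
  show ?case using insert r1 r2 by (intro exI[of _ "r1 + r2"]) (simp add: algebra_simps)
qed

definition mulset :: "nat \<Rightarrow> nat \<Rightarrow> nat set \<Rightarrow> nat set" where
  "mulset N m S = (\<lambda>x. (m * x) mod N) ` S"

lemma partition_finite:
  assumes "is_partition_of N P" shows "finite P"
proof -
  have "P \<subseteq> Pow {..<N}" using assms unfolding is_partition_of_def by blast
  then show ?thesis by (rule finite_subset) simp
qed

lemma partition_sub:
  assumes "is_partition_of N P" "A \<in> P" shows "A \<subseteq> {..<N}"
  using assms unfolding is_partition_of_def by blast

lemma partition_disj:
  assumes "is_partition_of N P" "A \<in> P" "B \<in> P" "x \<in> A" "x \<in> B" shows "A = B"
  using assms unfolding is_partition_of_def by blast

lemma partition_cover:
  assumes "is_partition_of N P" "x < N" obtains A where "A \<in> P" "x \<in> A"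
  using assms unfolding is_partition_of_def by blast

lemma zspan_const:
  assumes P: "is_partition_of N P" and f: "f \<in> zspan N P" and C: "C \<in> P" "z1 \<in> C" "z2 \<in> C"
  shows "f z1 = f z2"
proof -
  obtain c where c: "\<And>x. x < N \<Longrightarrow> f x = (\<Sum>C\<in>P. c C * ind C x)"
    using f unfolding zspan_def by blast
  have fin: "finite P" by (rule partition_finite[OF P])
  have *: "f z = c C" if "z \<in> C" for z
  proof -
    have zN: "z < N" using partition_sub[OF P C(1)] that by blast
    have "f z = (\<Sum>C'\<in>P. c C' * ind C' z)" using c zN by blast
    also have "\<dots> = c C * ind C z + (\<Sum>C'\<in>P - {C}. c C' * ind C' z)"
      using fin C(1) by (simp add: sum.remove)
    also have "(\<Sum>C'\<in>P - {C}. c C' * ind C' z) = 0"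
    proof (rule sum.neutral, rule ballI)
      fix C' assume "C' \<in> P - {C}"
      then have "z \<notin> C'" using partition_disj[OF P _ C(1) _ that, of C'] by auto
      then show "c C' * ind C' z = 0" by (simp add: ind_def)
    qed
    finally show ?thesis using that by (simp add: ind_def)
  qed
  show ?thesis using *[OF C(2)] *[OF C(3)] by simp
qed

lemma ind_zspan:
  assumes "A \<in> P" "finite P" shows "ind A \<in> zspan N P"
  unfolding zspan_def
proof (intro CollectI exI[of _ "\<lambda>C. if C = A then 1 else 0"] allI impI)
  fix x assume "x < N"
  have "(\<Sum>C\<in>P. (if C = A then 1 else 0) * ind C x) = (\<Sum>C\<in>P. if C = A then ind A x else 0)"
    by (rule sum.cong) auto
  also have "\<dots> = ind A x" using assms by (simp add: sum.delta')
  finally show "ind A x = (\<Sum>C\<in>P. (if C = A then 1 else 0) * ind C x)" by simp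
qed

lemma cpow_zspan:
  assumes "unital_partition N P" "A \<in> P"
  shows "cpow N (ind A) i \<in> zspan N P"
proof -
  have P: "is_partition_of N P" "{0} \<in> P" "\<And>f g. f \<in> zspan N P \<Longrightarrow> g \<in> zspan N P \<Longrightarrow> cconv N f g \<in> zspan N P"
    using assms unfolding unital_partition_def by auto
  have fin: "finite P" by (rule partition_finite[OF P(1)])
  show ?thesis
  proof (induction i)
    case 0 show ?case using ind_zspan[OF P(2) fin] by simp
  next
    case (Suc i) then show ?case using P(3)[OF ind_zspan[OF assms(2) fin]] by simp
  qed
qed

lemma mod_mult_inj:
  fixes q N x y :: nat
  assumes "coprime q N" "x < N" "y < N" "(q * x) mod N = (q * y) mod N"
  shows "x = y"
proof -
  have "[q * x = q * y] (mod N)" using assms(4) unfolding cong_def .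
  then have "[x = y] (mod N)" using cong_mult_lcancel_nat[OF assms(1)] by blast
  then show ?thesis using assms(2,3) by (rule cong_less_modulus_unique_nat)
qed

lemma block_mult_prime:
  assumes U: "unital_partition N P" and N: "N > 0" and A: "A \<in> P" and C: "C \<in> P" "z1 \<in> C" "z2 \<in> C"
    and q: "prime q" "coprime q N" and z1: "z1 \<in> mulset N q A"
  shows "z2 \<in> mulset N q A"
proof (rule ccontr)
  assume nz2: "z2 \<notin> mulset N q A"
  have P: "is_partition_of N P" using U unfolding unital_partition_def by auto
  have AN: "A \<subseteq> {..<N}" by (rule partition_sub[OF P A])
  have CN: "C \<subseteq> {..<N}" by (rule partition_sub[OF P C(1)])
  have finA: "finite A" using AN finite_subset by blast
  obtain R where R: "(\<Sum>x\<in>A. monom 1 x) ^ q = (\<Sum>x\<in>A. monom 1 x ^ q) + of_nat q * (R :: int poly)"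
    using frob_sum[OF q(1) finA] by blast
  define s where "s z = (\<Sum>x\<in>A. if (x * q) mod N = z then 1 else 0 :: int)" for z
  have g: "cpow N (ind A) q z = s z + int q * red N R z" if "z < N" for z
  proof -
    have "cpow N (ind A) q z = red N (Phi A ^ q) z" using cpow_red[OF AN N that] .
    also have "Phi A ^ q = (\<Sum>x\<in>A. monom 1 (x * q)) + of_nat q * R"
      unfolding Phi_def R by (simp add: monom_power)
    also have "red N ((\<Sum>x\<in>A. monom 1 (x * q)) + of_nat q * R) z = red N (\<Sum>x\<in>A. monom 1 (x * q)) z + int q * red N R z"
      by (simp only: red_add of_nat_mult_conv_smult red_smult)
    also have "red N (\<Sum>x\<in>A. monom 1 (x * q)) z = s z"
      by (simp add: red_sum red_monom s_def)
    finally show ?thesis .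
  qed
  have eq: "cpow N (ind A) q z1 = cpow N (ind A) q z2"
    by (rule zspan_const[OF P cpow_zspan[OF U A] C])
  obtain x1 where x1: "x1 \<in> A" "z1 = (q * x1) mod N" using z1 unfolding mulset_def by blast
  have "s z1 = (\<Sum>x\<in>{x1}. if (x * q) mod N = z1 then 1 else 0)"
    unfolding s_def
  proof (rule sum.mono_neutral_right)
    show "\<forall>i\<in>A - {x1}. (if i * q mod N = z1 then 1 else 0 :: int) = 0"
    proof
      fix i assume i: "i \<in> A - {x1}"
      have "i * q mod N \<noteq> z1"
      proof
        assume "i * q mod N = z1"
        then have "(q * i) mod N = (q * x1) mod N" using x1 by (simp add: mult.commute)
        then have "i = x1" using mod_mult_inj[OF q(2)] i x1 AN by blast
        then show False using i by blast
      qed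
      then show "(if i * q mod N = z1 then 1 else 0 :: int) = 0" by simp
    qed
  qed (use finA x1 in auto)
  then have s1: "s z1 = 1" using x1 by (simp add: mult.commute)
  have s2: "s z2 = 0" unfolding s_def
  proof (rule sum.neutral, safe)
    fix x assume "x \<in> A"
    then have "(x * q) mod N \<noteq> z2" using nz2 unfolding mulset_def by (auto simp: mult.commute)
    then show "(if (x * q) mod N = z2 then 1 else 0 :: int) = 0" by simp
  qed
  have "z1 < N" "z2 < N" using CN C by auto
  then have "1 + int q * red N R z1 = int q * red N R z2"
    using eq g[of z1] g[of z2] s1 s2 by simp
  then have "1 = int q * (red N R z2 - red N R z1)" by (simp add: algebra_simps)
  then have "int q dvd 1" by (rule dvdI)
  then have "int q \<le> 1" by (rule zdvd_imp_le) simp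
  then show False using prime_gt_1_nat[OF q(1)] by simp
qed

definition Sset :: "nat \<Rightarrow> nat set set \<Rightarrow> nat set \<Rightarrow> bool" where
  "Sset N P S \<longleftrightarrow> S \<subseteq> {..<N} \<and> (\<forall>C\<in>P. C \<inter> S \<noteq> {} \<longrightarrow> C \<subseteq> S)"

lemma Sset_block: "Sset N P S \<Longrightarrow> C \<in> P \<Longrightarrow> z \<in> C \<Longrightarrow> z \<in> S \<Longrightarrow> C \<subseteq> S"
  unfolding Sset_def by blast

lemma mulset_sub: "N > 0 \<Longrightarrow> mulset N m S \<subseteq> {..<N}"
  unfolding mulset_def by auto

lemma mulset_mult: "mulset N (a * b) S = mulset N a (mulset N b S)"
  unfolding mulset_def image_image by (intro image_cong refl) (simp add: mod_mult_right_eq mult.assoc)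

lemma mulset_1: "S \<subseteq> {..<N} \<Longrightarrow> mulset N 1 S = S"
proof -
  assume a: "S \<subseteq> {..<N}"
  have "(\<lambda>x. (1 * x) mod N) ` S = (\<lambda>x. x) ` S" by (rule image_cong) (use a in auto)
  then show ?thesis unfolding mulset_def by simp
qed

lemma Sset_prime:
  assumes U: "unital_partition N P" and N: "N > 0" and S: "Sset N P S" and q: "prime q" "coprime q N"
  shows "Sset N P (mulset N q S)"
proof -
  have P: "is_partition_of N P" using U unfolding unital_partition_def by auto
  have "C \<subseteq> mulset N q S" if C: "C \<in> P" "z \<in> C" "z \<in> mulset N q S" for C z
  proof
    fix z' assume z': "z' \<in> C"
    obtain x where x: "x \<in> S" "z = (q * x) mod N" using C(3) unfolding mulset_def by blast
    have "x < N" using S x unfolding Sset_def by blast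
    then obtain A where A: "A \<in> P" "x \<in> A" using partition_cover[OF P] by blast
    have AS: "A \<subseteq> S" using S A x unfolding Sset_def by blast
    have "z \<in> mulset N q A" using x A unfolding mulset_def by blast
    then have "z' \<in> mulset N q A" using block_mult_prime[OF U N A(1) C(1) C(2) z' q] by blast
    then show "z' \<in> mulset N q S" using AS unfolding mulset_def by blast
  qed
  then show ?thesis unfolding Sset_def using mulset_sub[OF N] by blast
qed

lemma Sset_mult:
  assumes U: "unital_partition N P" and N: "N > 0" and S: "Sset N P S"
  shows "m > 0 \<Longrightarrow> coprime m N \<Longrightarrow> Sset N P (mulset N m S)"
proof (induction m rule: less_induct)
  case (less m)
  show ?case
  proof (cases "m = 1")
    case True then show ?thesis using S mulset_1[of S N] by (simp add: Sset_def)
  next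
    case False
    then obtain q where q: "prime q" "q dvd m" using prime_factor_nat by blast
    then obtain m' where m': "m = q * m'" by blast
    have "m' > 0" using less.prems m' by auto
    have "m' < m" using m' prime_gt_1_nat[OF q(1)] \<open>m' > 0\<close> by simp
    have cm': "coprime m' N" using less.prems(2) m' by simp
    have cq: "coprime q N" using less.prems(2) m' by simp
    have "Sset N P (mulset N m' S)" using less.IH[OF \<open>m' < m\<close> \<open>m' > 0\<close> cm'] .
    then have "Sset N P (mulset N q (mulset N m' S))" using Sset_prime[OF U N _ q(1) cq] by blast
    then show ?thesis using m' by (simp add: mulset_mult)
  qed
qed

theorem multiplier:
  assumes U: "unital_partition N P" and N: "N > 1" and A: "A \<in> P" and m: "coprime m N"
  shows "mulset N m A \<in> P"
proof -
  have P: "is_partition_of N P" using U unfolding unital_partition_def by auto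
  have m0: "m > 0" using m N by (cases m) auto
  have AN: "A \<subseteq> {..<N}" by (rule partition_sub[OF P A])
  have SA: "Sset N P A" unfolding Sset_def using AN partition_disj[OF P _ A] by blast
  have S1: "Sset N P (mulset N m A)" by (rule Sset_mult[OF U _ SA m0 m]) (use N in auto)
  have "A \<noteq> {}" using P A unfolding is_partition_of_def by blast
  then obtain z where z: "z \<in> mulset N m A" unfolding mulset_def by blast
  have "z < N" using z mulset_sub[of N m A] N by auto
  then obtain C where C: "C \<in> P" "z \<in> C" using partition_cover[OF P] by blast
  have CS: "C \<subseteq> mulset N m A" by (rule Sset_block[OF S1 C z])
  define m' where "m' = m ^ (totient N - 1)"
  have m'0: "m' > 0" using m0 by (simp add: m'_def)
  have cm': "coprime m' N" using m by (simp add: m'_def)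
  have tot: "totient N > 0" using N by simp
  have inv: "[m' * m = 1] (mod N)"
  proof -
    have "m ^ totient N = m ^ (totient N - 1) * m" using tot by (metis Suc_diff_1 power_Suc2)
    then have "m' * m = m ^ totient N" by (simp add: m'_def)
    then show ?thesis using euler_theorem[of m N] m by (simp add: coprime_commute)
  qed
  have inv2: "mulset N (m' * m) B = B" if "B \<subseteq> {..<N}" for B
  proof -
    have "((m' * m) * x) mod N = x" if "x < N" for x
    proof -
      have "[(m' * m) * x = 1 * x] (mod N)" by (rule cong_scalar_right[OF inv])
      then show ?thesis using that by (simp add: cong_def)
    qed
    then have "(\<lambda>x. ((m' * m) * x) mod N) ` B = (\<lambda>x. x) ` B" by (intro image_cong) (use that in auto)
    then show ?thesis unfolding mulset_def by simp
  qed
  have S2: "Sset N P (mulset N m' C)"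
    by (rule Sset_mult[OF U _ _ m'0 cm']) (use N partition_disj[OF P _ C(1)] partition_sub[OF P C(1)] in \<open>auto simp: Sset_def\<close>)
  have sub: "mulset N m' C \<subseteq> A"
  proof -
    have "mulset N m' C \<subseteq> mulset N m' (mulset N m A)" using CS unfolding mulset_def by blast
    also have "\<dots> = A" using inv2[OF AN] by (simp add: mulset_mult)
    finally show ?thesis .
  qed
  obtain w where w: "w \<in> mulset N m' C" using C(2) unfolding mulset_def by blast
  then have "w \<in> A" using sub by blast
  then have "A \<subseteq> mulset N m' C" by (rule Sset_block[OF S2 A _ w])
  with sub have "mulset N m' C = A" by blast
  then have "mulset N m A = mulset N (m * m') C" by (simp add: mulset_mult)
  also have "\<dots> = C" using inv2[OF partition_sub[OF P C(1)]] by (simp add: mult.commute)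
  finally show ?thesis using C by simp
qed



lemma cong_nat_dvd: "[a = b] (mod m) \<longleftrightarrow> int m dvd int a - int b" for a b m :: nat
  by (metis cong_int_iff cong_iff_dvd_diff)

lemma lift_one:
  fixes p x j :: nat
  assumes p: "prime p" and j: "j \<ge> 1" and x: "[x = 1] (mod p ^ j)"
  shows "[x ^ p = 1] (mod p ^ Suc j)"
proof -
  have d1: "int (p ^ j) dvd int x - 1" using x by (simp add: cong_nat_dvd)
  have "p dvd p ^ j" using j by (intro dvd_power) auto
  then have "[x = 1] (mod p)" by (rule cong_dvd_modulus_nat[OF x])
  then have "[(\<Sum>i<p. x ^ i) = (\<Sum>i<p. 1 ^ i)] (mod p)" by (intro cong_sum cong_pow) auto
  then have "[(\<Sum>i<p. x ^ i) = p] (mod p)" by simp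
  then have "[(\<Sum>i<p. x ^ i) = 0] (mod p)" by (simp add: cong_def)
  then have "p dvd (\<Sum>i<p. x ^ i)" by (simp only: cong_0_iff)
  then have d2: "int p dvd int (\<Sum>i<p. x ^ i)" by (simp only: int_dvd_int_iff)
  have "int x ^ p - 1 = (int x - 1) * (\<Sum>i<p. int x ^ i)" by (rule power_diff_1_eq)
  also have "\<dots> = (int x - 1) * int (\<Sum>i<p. x ^ i)" by simp
  finally have eq: "int x ^ p - 1 = (int x - 1) * int (\<Sum>i<p. x ^ i)" .
  have "int (p ^ j) * int p dvd (int x - 1) * int (\<Sum>i<p. x ^ i)"
    using d1 d2 by (rule mult_dvd_mono)
  then have "int (p ^ Suc j) dvd int (x ^ p) - int 1" using eq by (simp add: mult.commute)
  then show ?thesis by (simp add: cong_nat_dvd)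
qed

lemma lift_pow:
  fixes p x j :: nat
  assumes p: "prime p" and j: "j \<ge> 1" and x: "[x = 1] (mod p ^ j)"
  shows "[x ^ (p ^ i) = 1] (mod p ^ (j + i))"
proof (induction i)
  case 0 then show ?case using x by simp
next
  case (Suc i)
  have "[(x ^ (p ^ i)) ^ p = 1] (mod p ^ Suc (j + i))" by (rule lift_one[OF p _ Suc]) (use j in simp)
  then show ?case by (simp add: power_mult[symmetric] mult.commute)
qed

lemma totient_pp: "prime p \<Longrightarrow> j \<ge> 1 \<Longrightarrow> totient (p ^ j) = p ^ (j - 1) * (p - 1)"
  by (simp add: totient_prime_power)

lemma primroot_ord:
  fixes p n \<alpha> e j :: nat
  assumes p: "prime p" and r: "residue_primroot (p ^ n) \<alpha>" and j: "1 \<le> j" "j \<le> n"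
    and c: "[\<alpha> ^ e = 1] (mod p ^ j)"
  shows "totient (p ^ j) dvd e"
proof -
  have "[(\<alpha> ^ e) ^ (p ^ (n - j)) = 1] (mod p ^ (j + (n - j)))" by (rule lift_pow[OF p j(1) c])
  then have "[\<alpha> ^ (e * p ^ (n - j)) = 1] (mod p ^ n)" using j by (simp add: power_mult)
  then have "ord (p ^ n) \<alpha> dvd e * p ^ (n - j)" by (simp add: ord_divides')
  then have "totient (p ^ n) dvd e * p ^ (n - j)" using r by (simp add: residue_primroot_def)
  then have d0: "p ^ (n - 1) * (p - 1) dvd e * p ^ (n - j)" using totient_pp[OF p, of n] j by simp
  have "n - 1 = (n - j) + (j - 1)" using j by simp
  then have "p ^ (n - 1) = p ^ (n - j) * p ^ (j - 1)" by (metis power_add)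
  then have eqp: "p ^ (n - 1) * (p - 1) = p ^ (n - j) * (p ^ (j - 1) * (p - 1))" by (simp add: mult.assoc)
  have pnz: "p ^ (n - j) \<noteq> 0" using p by (simp add: prime_gt_0_nat)
  have "p ^ (n - j) * (p ^ (j - 1) * (p - 1)) dvd p ^ (n - j) * e" using d0 unfolding eqp by (simp add: mult.commute)
  then have "p ^ (j - 1) * (p - 1) dvd e" using \<open>p ^ (n - j) \<noteq> 0\<close> by (simp only: nat_mult_dvd_cancel_disj) simp
  then show ?thesis using totient_pp[OF p j(1)] by simp
qed

lemma primroot_ord_conv:
  fixes p n \<alpha> e j :: nat
  assumes p: "prime p" and r: "residue_primroot (p ^ n) \<alpha>" and j: "1 \<le> j" "j \<le> n"
    and d: "totient (p ^ j) dvd e"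
  shows "[\<alpha> ^ e = 1] (mod p ^ j)"
proof -
  have "coprime (p ^ n) \<alpha>" using r by (simp add: residue_primroot_def)
  then have "coprime \<alpha> p" using j by (simp add: coprime_commute)
  then have "[\<alpha> ^ totient (p ^ j) = 1] (mod p ^ j)" by (intro euler_theorem) simp
  then have "[(\<alpha> ^ totient (p ^ j)) ^ (e div totient (p ^ j)) = 1 ^ (e div totient (p ^ j))] (mod p ^ j)"
    by (rule cong_pow)
  then show ?thesis using d by (simp add: power_mult[symmetric])
qed

lemma discrete_log:
  fixes N \<alpha> m :: nat
  assumes r: "residue_primroot N \<alpha>" and N: "N > 1" and m: "coprime m N"
  shows "\<exists>u. [\<alpha> ^ u = m] (mod N)"
proof -
  have co: "coprime N \<alpha>" and ordt: "ord N \<alpha> = totient N" using r by (auto simp: residue_primroot_def)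
  have inj: "inj_on (\<lambda>k. \<alpha> ^ k mod N) {..<totient N}" using inj_power_mod[OF co] ordt by simp
  have sub: "(\<lambda>k. \<alpha> ^ k mod N) ` {..<totient N} \<subseteq> totatives N"
  proof
    fix z assume "z \<in> (\<lambda>k. \<alpha> ^ k mod N) ` {..<totient N}"
    then obtain k where z: "z = \<alpha> ^ k mod N" by blast
    have "coprime (\<alpha> ^ k) N" using co by (simp add: coprime_commute)
    then have cz: "coprime z N" unfolding z using N by (simp add: coprime_mod_left_iff)
    have "z \<noteq> 0"
    proof
      assume "z = 0" then have "coprime 0 N" using cz by simp
      then show False using N by simp
    qed
    moreover have "z < N" using N z by simp
    ultimately show "z \<in> totatives N" using cz by (simp add: totatives_def)
  qed
  have "card ((\<lambda>k. \<alpha> ^ k mod N) ` {..<totient N}) = totient N" using inj by (simp add: card_image)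
  then have c2: "card ((\<lambda>k. \<alpha> ^ k mod N) ` {..<totient N}) = card (totatives N)"
    by (simp only: totient_def)
  have eq: "(\<lambda>k. \<alpha> ^ k mod N) ` {..<totient N} = totatives N"
    by (rule card_subset_eq[OF finite_totatives sub c2])
  have "m mod N \<noteq> 0"
  proof
    assume "m mod N = 0" then have "N dvd m" by auto
    then have "is_unit N" using m by (meson coprime_common_divisor dvd_refl)
    then show False using N by simp
  qed
  then have "m mod N \<in> totatives N" using m N by (simp add: totatives_def less_imp_le)
  then have "m mod N \<in> (\<lambda>k. \<alpha> ^ k mod N) ` {..<totient N}" by (simp only: eq)
  then obtain k where "m mod N = \<alpha> ^ k mod N" by (auto simp: image_iff)
  then show ?thesis by (auto simp: cong_def)
qed


lemma cong_cancel_pow: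
  fixes p j b a c :: nat
  assumes p: "prime p" and h: "[p ^ j * a = p ^ j * c] (mod p ^ (j + b))"
  shows "[a = c] (mod p ^ b)"
proof -
  have "int (p ^ j) * int (p ^ b) dvd int (p ^ j) * (int a - int c)"
    using h by (simp add: cong_nat_dvd power_add algebra_simps)
  moreover have nz: "int (p ^ j) \<noteq> 0" using p by (simp add: prime_gt_0_nat)
  ultimately have "int (p ^ b) dvd int a - int c" using p by (auto simp: prime_gt_0_nat)
  then show ?thesis by (simp add: cong_nat_dvd)
qed

lemma cong_mult_layer:
  fixes p j b m w :: nat
  assumes m: "[m = 1] (mod p ^ b)" and w: "p ^ j dvd w"
  shows "[m * w = w] (mod p ^ (j + b))"
proof -
  have "int (p ^ b) dvd int m - 1" using m by (simp add: cong_nat_dvd)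
  then have "int (p ^ b) * int (p ^ j) dvd (int m - 1) * int w" using w by (intro mult_dvd_mono) auto
  then have "int (p ^ (j + b)) dvd int (m * w) - int w" by (simp add: power_add algebra_simps)
  then show ?thesis by (simp add: cong_nat_dvd)
qed

lemma layer_exists:
  fixes p z :: nat
  assumes p: "prime p"
  shows "0 < z \<Longrightarrow> \<exists>j. p ^ j dvd z \<and> \<not> p ^ Suc j dvd z"
proof (induction z rule: less_induct)
  case (less z)
  show ?case
  proof (cases "p dvd z")
    case False
    then show ?thesis by (intro exI[of _ 0]) simp
  next
    case True
    then obtain z' where z': "z = p * z'" by blast
    have "z' > 0" using less.prems z' by auto
    moreover have "z' < z" using z' prime_gt_1_nat[OF p] \<open>z' > 0\<close> by simp
    ultimately obtain j where j: "p ^ j dvd z'" "\<not> p ^ Suc j dvd z'" using less.IH by blast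
    have "p ^ Suc j dvd z" using j(1) z' by simp
    moreover have "\<not> p ^ Suc (Suc j) dvd z"
    proof
      assume "p ^ Suc (Suc j) dvd z"
      then have "p * p ^ Suc j dvd p * z'" using z' by simp
      then show False using j(2) p by (simp add: prime_gt_0_nat)
    qed
    ultimately show ?thesis by blast
  qed
qed

lemma layer_lt:
  fixes p n z j :: nat
  assumes p: "prime p" and z: "0 < z" "z < p ^ n" "p ^ j dvd z"
  shows "j < n"
proof -
  have "p ^ j \<le> z" using z by (simp add: dvd_imp_le)
  then have "p ^ j < p ^ n" using z by simp
  then show ?thesis by (rule power_less_imp_less_exp[OF prime_gt_1_nat[OF p]])
qed

lemma layer_unique:
  fixes p z i j :: nat
  assumes "p ^ i dvd z" "\<not> p ^ Suc i dvd z" "p ^ j dvd z" "\<not> p ^ Suc j dvd z" and p: "prime p"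
  shows "i = j"
proof (rule ccontr)
  assume "i \<noteq> j"
  then have "Suc i \<le> j \<or> Suc j \<le> i" by auto
  then show False
  proof
    assume "Suc i \<le> j" then have "p ^ Suc i dvd p ^ j" by (rule le_imp_power_dvd)
    then show False using assms by (meson dvd_trans)
  next
    assume "Suc j \<le> i" then have "p ^ Suc j dvd p ^ i" by (rule le_imp_power_dvd)
    then show False using assms by (meson dvd_trans)
  qed
qed

lemma layer_decomp:
  fixes p j z :: nat
  assumes p: "prime p" and "p ^ j dvd z" "\<not> p ^ Suc j dvd z"
  shows "\<exists>z'. z = p ^ j * z' \<and> coprime z' p"
proof -
  obtain z' where z': "z = p ^ j * z'" using assms by blast
  have "\<not> p dvd z'"
  proof
    assume "p dvd z'" then have "p ^ Suc j dvd z" using z' by simp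
    then show False using assms by simp
  qed
  then have "coprime z' p" using p by (simp add: prime_imp_coprime coprime_commute)
  then show ?thesis using z' by blast
qed

lemma Bset_layer:
  fixes p n k y :: nat
  assumes p: "prime p" and k: "k < n" and y: "y \<in> Bset p n k"
  shows "y < p ^ n" "p ^ k dvd y" "\<not> p ^ Suc k dvd y" "\<exists>x. coprime x p \<and> y = (p ^ k * x) mod p ^ n"
proof -
  obtain x where x: "y = (p ^ k * x) mod p ^ n" "coprime x (p ^ n)" using y unfolding Bset_def by blast
  have cx: "coprime x p" using x(2) k by simp
  show "y < p ^ n" using x p by (simp add: prime_gt_0_nat)
  show "\<exists>x. coprime x p \<and> y = (p ^ k * x) mod p ^ n" using x cx by blast
  have dec: "p ^ k * x = (p ^ k * x) div p ^ n * p ^ n + y" using x(1) div_mult_mod_eq[of "p ^ k * x" "p ^ n"] by simp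
  have pkn: "p ^ k dvd p ^ n" using k by (intro le_imp_power_dvd) simp
  have pkn1: "p ^ Suc k dvd p ^ n" using k by (intro le_imp_power_dvd) simp
  have "p ^ k dvd (p ^ k * x) div p ^ n * p ^ n + y" using dec by (metis dvd_triv_left)
  then show "p ^ k dvd y" using pkn by (simp add: dvd_add_right_iff)
  show "\<not> p ^ Suc k dvd y"
  proof
    assume h: "p ^ Suc k dvd y"
    have "p ^ Suc k dvd (p ^ k * x) div p ^ n * p ^ n" using pkn1 by simp
    then have "p ^ Suc k dvd p ^ k * x" using h dec by (metis dvd_add)
    then have "p * p ^ k dvd x * p ^ k" by (simp add: mult.commute)
    then have "p dvd x" using p by (simp add: prime_gt_0_nat)
    then show False using cx p by (metis coprime_commute not_prime_unit coprime_absorb_left)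
  qed
qed

lemma card_residue_class:
  fixes M K w :: nat
  assumes M: "M > 0"
  shows "card {z. z < M * K \<and> [z = w] (mod M)} = K"
proof -
  define w0 where "w0 = w mod M"
  have w0: "w0 < M" using M by (simp add: w0_def)
  have eq: "{z. z < M * K \<and> [z = w] (mod M)} = (\<lambda>t. w0 + M * t) ` {..<K}"
  proof (intro equalityI subsetI)
    fix z assume z: "z \<in> {z. z < M * K \<and> [z = w] (mod M)}"
    then have zm: "z mod M = w0" by (simp add: cong_def w0_def)
    have "z = w0 + M * (z div M)" using zm by (metis div_mult_mod_eq add.commute mult.commute)
    moreover have "z div M < K" using z M by (simp add: less_mult_imp_div_less mult.commute)
    ultimately show "z \<in> (\<lambda>t. w0 + M * t) ` {..<K}" by blast
  next
    fix z assume "z \<in> (\<lambda>t. w0 + M * t) ` {..<K}"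
    then obtain t where t: "t < K" "z = w0 + M * t" by blast
    have "w0 + M * t < M + M * t" using w0 by simp
    also have "\<dots> = M * Suc t" by simp
    also have "\<dots> \<le> M * K" using t by (intro mult_le_mono2) simp
    finally have "z < M * K" using t by simp
    moreover have "[z = w] (mod M)" using t w0 by (simp add: cong_def w0_def)
    ultimately show "z \<in> {z. z < M * K \<and> [z = w] (mod M)}" by blast
  qed
  have "inj_on (\<lambda>t. w0 + M * t) {..<K}" using M by (auto simp: inj_on_def)
  then show ?thesis unfolding eq by (simp add: card_image)
qed


lemma layer_unit:
  fixes p n j z w z' w' N :: nat
  assumes p: "prime p" and NN: "N = p ^ n" and j: "j < n"
    and z: "z = p ^ j * z'" "coprime z' p" "z < N"
    and w: "w = p ^ j * w'" "coprime w' p"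
  defines "m \<equiv> z' * w' ^ (totient N - 1)"
  shows "coprime m N" "(m * w) mod N = z"
    "\<And>b. j + b \<le> n \<Longrightarrow> [z = w] (mod p ^ (j + b)) \<Longrightarrow> [m = 1] (mod p ^ b)"
proof -
  have n0: "n > 0" using j by simp
  have N1: "N > 1" using NN one_less_power[OF prime_gt_1_nat[OF p] n0] by simp
  show cm: "coprime m N" unfolding m_def NN using z w by simp
  have cw: "coprime w' N" using w NN by simp
  have tot: "totient N > 0" using N1 by simp
  have wT: "w' ^ (totient N - 1) * w' = w' ^ totient N" using tot by (metis Suc_diff_1 power_Suc2)
  have e: "[w' ^ totient N = 1] (mod N)" using euler_theorem[OF cw] .
  have "m * w = p ^ j * z' * (w' ^ (totient N - 1) * w')" unfolding m_def w by (simp add: ac_simps)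
  also have "\<dots> = z * w' ^ totient N" using z wT by simp
  finally have mw: "m * w = z * w' ^ totient N" .
  have "[z * w' ^ totient N = z * 1] (mod N)" by (rule cong_scalar_left[OF e])
  then show "(m * w) mod N = z" using mw z by (simp add: cong_def)
  fix b assume b: "j + b \<le> n" and c: "[z = w] (mod p ^ (j + b))"
  have "[z' = w'] (mod p ^ b)" using cong_cancel_pow[OF p, of j z' w' b] c z w by simp
  then have "[m = w' * w' ^ (totient N - 1)] (mod p ^ b)" unfolding m_def by (rule cong_scalar_right)
  moreover have "[w' * w' ^ (totient N - 1) = 1] (mod p ^ b)"
  proof -
    have "p ^ b dvd N" unfolding NN using b by (intro le_imp_power_dvd) simp
    then show ?thesis using e wT by (metis cong_dvd_modulus_nat mult.commute)
  qed
  ultimately show "[m = 1] (mod p ^ b)" by (rule cong_trans)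
qed

lemma cong_dvd_transfer:
  fixes z w M d :: nat
  assumes "[z = w] (mod M)" "d dvd M" "d dvd w"
  shows "d dvd z"
proof -
  have "int M dvd int z - int w" using assms(1) by (simp add: cong_nat_dvd)
  then have "int d dvd int z - int w" using assms(2) by (meson dvd_trans int_dvd_int_iff)
  moreover have "int d dvd int w" using assms(3) by simp
  ultimately have "int d dvd int z" using dvd_add by fastforce
  then show ?thesis by simp
qed

lemma coprime_dvd_unit:
  fixes a b :: nat
  assumes "coprime a b" "a dvd b" shows "a = 1"
proof -
  have "is_unit a" using coprime_common_divisor[OF assms(1) dvd_refl assms(2)] .
  then show ?thesis by simp
qed

lemma distinct_pow_sum:
  fixes p n b e :: nat and J :: "nat set"
  assumes p: "prime p" and J: "finite J" "J \<noteq> {}" and Jb: "\<forall>j\<in>J. j + b \<le> n"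
    and s: "(\<Sum>j\<in>J. p ^ (n - j - b)) = p ^ e"
  shows "J = {Max J}"
proof -
  define j0 where "j0 = Max J"
  have j0J: "j0 \<in> J" using J by (simp add: j0_def)
  have j0m: "j \<le> j0" if "j \<in> J" for j using J that by (simp add: j0_def)
  define g where "g = n - j0 - b"
  define X where "X = (\<Sum>j\<in>J - {j0}. p ^ (j0 - j - 1))"
  have "(\<Sum>j\<in>J. p ^ (n - j - b)) = p ^ (n - j0 - b) + (\<Sum>j\<in>J - {j0}. p ^ (n - j - b))"
    using J j0J by (simp add: sum.remove)
  also have "(\<Sum>j\<in>J - {j0}. p ^ (n - j - b)) = (\<Sum>j\<in>J - {j0}. p ^ g * p * p ^ (j0 - j - 1))"
  proof (rule sum.cong[OF refl])
    fix j assume j: "j \<in> J - {j0}"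
    then have "j < j0" using j0m by force
    moreover have "j0 + b \<le> n" using Jb j0J by blast
    ultimately have "n - j - b = g + 1 + (j0 - j - 1)" unfolding g_def by simp
    then show "p ^ (n - j - b) = p ^ g * p * p ^ (j0 - j - 1)" by (simp add: power_add)
  qed
  also have "\<dots> = p ^ g * (p * X)" by (simp add: X_def sum_distrib_left mult.assoc)
  finally have "p ^ e = p ^ g * (1 + p * X)" using s by (simp add: g_def algebra_simps)
  then have dv: "1 + p * X dvd p ^ e" by (metis dvd_triv_right)
  have "\<not> p dvd 1 + p * X"
  proof
    assume "p dvd 1 + p * X" then have "p dvd (1 + p * X) - p * X" by (intro dvd_diff_nat) simp_all
    then show False using p by simp
  qed
  then have "coprime (1 + p * X) p" using p by (simp add: prime_imp_coprime coprime_commute)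
  then have "coprime (1 + p * X) (p ^ e)" by simp
  then have "1 + p * X = 1" using dv by (rule coprime_dvd_unit)
  then have "X = 0" using p by (simp add: prime_gt_0_nat)
  have "J - {j0} = {}"
  proof (rule ccontr)
    assume "J - {j0} \<noteq> {}" then obtain j where jj: "j \<in> J - {j0}" by blast
    then have "p ^ (j0 - j - 1) \<le> X" unfolding X_def using J by (intro member_le_sum) auto
    moreover have "p ^ (j0 - j - 1) > 0" using p by (simp add: prime_gt_0_nat)
    ultimately show False using \<open>X = 0\<close> by simp
  qed
  then show ?thesis using j0J unfolding j0_def by blast
qed

definition layer :: "nat \<Rightarrow> nat \<Rightarrow> nat \<Rightarrow> nat set" where
  "layer q M j = {z. z < M \<and> q ^ j dvd z \<and> \<not> q ^ Suc j dvd z}"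

context
  fixes p n \<alpha> N :: nat and P :: "nat set set"
  assumes p: "prime p" and n: "1 \<le> n" and NN: "N = p ^ n" and U: "unital_partition N P"
    and cp: "cond_p p P" and r: "residue_primroot N \<alpha>"
begin

lemma N1: "N > 1" using NN one_less_power[OF prime_gt_1_nat[OF p], of n] n by simp

lemma PP: "is_partition_of N P" using U unfolding unital_partition_def by simp

lemma S1:
  assumes A: "A \<in> P" and x: "x \<in> A" and m: "coprime m N" and mx: "(m * x) mod N \<in> A"
  shows "mulset N m A = A"
proof -
  have "mulset N m A \<in> P" by (rule multiplier[OF U N1 A m])
  moreover have "(m * x) mod N \<in> mulset N m A" using x unfolding mulset_def by blast
  ultimately show ?thesis using partition_disj[OF PP _ A _ mx] by blast
qed

lemma S1':
  assumes "mulset N m A = A" "w \<in> A" shows "(m * w) mod N \<in> A"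
  using assms unfolding mulset_def by blast

context
  fixes y b :: nat and A :: "nat set"
  assumes A: "A \<in> P" and y: "y \<in> A" and b: "1 \<le> b" "b \<le> n"
    and uv: "uval p n \<alpha> A y = totient (p ^ b)"
begin

lemma AN: "A \<subseteq> {..<N}" using partition_sub[OF PP A] .

lemma yN: "y < N" using AN y by blast

lemma coprime_alpha: "coprime \<alpha> N" using r by (simp add: residue_primroot_def coprime_commute)

lemma uv_props:
  shows "0 < totient (p ^ b)" "(\<alpha> ^ totient (p ^ b) * y) mod N \<in> A"
    "\<And>u. 0 < u \<Longrightarrow> u < totient (p ^ b) \<Longrightarrow> (\<alpha> ^ u * y) mod N \<notin> A"
proof -
  have ex: "\<exists>u. 0 < u \<and> (\<alpha> ^ u * y) mod p ^ n \<in> A"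
  proof (intro exI conjI)
    show "0 < totient N" using N1 by simp
    have "[\<alpha> ^ totient N = 1] (mod N)" using euler_theorem[OF coprime_alpha] .
    then have "[\<alpha> ^ totient N * y = 1 * y] (mod N)" by (rule cong_scalar_right)
    then show "(\<alpha> ^ totient N * y) mod p ^ n \<in> A" using yN y NN by (simp add: cong_def)
  qed
  have L: "0 < uval p n \<alpha> A y \<and> (\<alpha> ^ uval p n \<alpha> A y * y) mod p ^ n \<in> A"
    unfolding uval_def by (rule LeastI_ex[OF ex])
  then show "0 < totient (p ^ b)" "(\<alpha> ^ totient (p ^ b) * y) mod N \<in> A" using uv NN by auto
  fix u assume "0 < u" "u < totient (p ^ b)"
  then show "(\<alpha> ^ u * y) mod N \<notin> A" using not_less_Least[of u "\<lambda>u. 0 < u \<and> (\<alpha> ^ u * y) mod p ^ n \<in> A"]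
    uv NN unfolding uval_def by auto
qed

lemma H_conv: "totient (p ^ b) dvd u \<Longrightarrow> mulset N (\<alpha> ^ u) A = A"
proof -
  assume "totient (p ^ b) dvd u"
  then obtain t where t: "u = totient (p ^ b) * t" by blast
  have base: "mulset N (\<alpha> ^ totient (p ^ b)) A = A"
    by (rule S1[OF A y]) (use coprime_alpha uv_props in auto)
  have "mulset N (\<alpha> ^ (totient (p ^ b) * t)) A = A" for t
  proof (induction t)
    case 0 then show ?case using mulset_1[OF AN] by simp
  next
    case (Suc t)
    have "\<alpha> ^ (totient (p ^ b) * Suc t) = \<alpha> ^ totient (p ^ b) * \<alpha> ^ (totient (p ^ b) * t)"
      by (simp add: power_add)
    then show ?case using Suc base by (simp add: mulset_mult)
  qed
  then show ?thesis using t by simp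
qed

lemma H_mem:
  assumes u: "(\<alpha> ^ u * y) mod N \<in> A"
  shows "totient (p ^ b) dvd u"
proof -
  define d where "d = totient (p ^ b)"
  define T where "T = totient N"
  define t where "t = u div d"
  define rr where "rr = u mod d"
  have d0: "d > 0" using uv_props(1) d_def by simp
  have u_eq: "u = d * t + rr" by (simp add: t_def rr_def)
  define c where "c = d * t * (T - 1)"
  have "mulset N (\<alpha> ^ c) A = A" by (rule H_conv) (simp add: c_def d_def)
  then have "(\<alpha> ^ c * ((\<alpha> ^ u * y) mod N)) mod N \<in> A" using u by (rule S1')
  then have h: "(\<alpha> ^ (c + u) * y) mod N \<in> A" by (simp add: mod_mult_right_eq power_add mult.assoc)
  have T0: "T > 0" using N1 T_def by simp
  have "c + u = T * (d * t) + rr" unfolding c_def u_eq using T0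
    by (cases T) (simp_all add: algebra_simps)
  then have "\<alpha> ^ (c + u) = (\<alpha> ^ T) ^ (d * t) * \<alpha> ^ rr" by (simp add: power_add power_mult)
  moreover have "[(\<alpha> ^ T) ^ (d * t) = 1 ^ (d * t)] (mod N)"
    by (rule cong_pow) (use euler_theorem[OF coprime_alpha] T_def in simp)
  ultimately have "[\<alpha> ^ (c + u) = 1 * \<alpha> ^ rr] (mod N)" by (metis cong_scalar_right power_one)
  then have "[\<alpha> ^ (c + u) * y = \<alpha> ^ rr * y] (mod N)" by (metis cong_scalar_right mult_1)
  then have "(\<alpha> ^ rr * y) mod N \<in> A" using h by (simp add: cong_def)
  moreover have "rr < d" using d0 by (simp add: rr_def)
  ultimately have "rr = 0" using uv_props(3)[of rr] d_def by (cases "rr = 0") auto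
  then show ?thesis using u_eq d_def by simp
qed

lemma H1:
  assumes m: "coprime m N" and w: "w \<in> A" and mw: "(m * w) mod N \<in> A"
  shows "[m = 1] (mod p ^ b)"
proof -
  obtain u where u: "[\<alpha> ^ u = m] (mod N)" using discrete_log[OF r N1 m] by blast
  have "mulset N m A = A" by (rule S1[OF A w m mw])
  then have "(m * y) mod N \<in> A" using y by (rule S1')
  moreover have "[\<alpha> ^ u * y = m * y] (mod N)" using u by (rule cong_scalar_right)
  ultimately have "(\<alpha> ^ u * y) mod N \<in> A" by (simp add: cong_def)
  then have "totient (p ^ b) dvd u" by (rule H_mem)
  then have "[\<alpha> ^ u = 1] (mod p ^ b)" using primroot_ord_conv[OF p _ b] r NN by simp
  moreover have "[\<alpha> ^ u = m] (mod p ^ b)"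
    using u NN b by (metis cong_dvd_modulus_nat le_imp_power_dvd)
  ultimately show ?thesis by (metis cong_sym cong_trans)
qed

lemma H2:
  assumes m: "coprime m N" and m1: "[m = 1] (mod p ^ b)" and w: "w \<in> A"
  shows "(m * w) mod N \<in> A"
proof -
  obtain u where u: "[\<alpha> ^ u = m] (mod N)" using discrete_log[OF r N1 m] by blast
  have "[\<alpha> ^ u = m] (mod p ^ b)"
    using u NN b by (metis cong_dvd_modulus_nat le_imp_power_dvd)
  then have "[\<alpha> ^ u = 1] (mod p ^ b)" using m1 by (rule cong_trans)
  then have "totient (p ^ b) dvd u" using primroot_ord[OF p _ b] r NN by simp
  then have "mulset N (\<alpha> ^ u) A = A" by (rule H_conv)
  then have "(\<alpha> ^ u * w) mod N \<in> A" using w by (rule S1')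
  moreover have "[\<alpha> ^ u * w = m * w] (mod N)" using u by (rule cong_scalar_right)
  ultimately show ?thesis by (simp add: cong_def)
qed

end


context
  fixes y b k :: nat and A :: "nat set"
  assumes A: "A \<in> P" and y: "y \<in> A" and b: "1 \<le> b" "b \<le> n"
    and uv: "uval p n \<alpha> A y = totient (p ^ b)"
    and k: "k < n" and ylay: "p ^ k dvd y" "\<not> p ^ Suc k dvd y"
begin

lemma AN': "A \<subseteq> {..<N}" using partition_sub[OF PP A] .

lemma zero_notin: "0 \<notin> A"
proof
  assume "0 \<in> A"
  have "{0} \<in> P" using U unfolding unital_partition_def by simp
  then have "A = {0}" using partition_disj[OF PP A _ \<open>0 \<in> A\<close>] by blast
  then have "y = 0" using y by simp
  then show False using ylay by simp
qed

lemma A_layer_bound: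
  assumes w: "w \<in> A" "p ^ j dvd w" "\<not> p ^ Suc j dvd w"
  shows "j + b \<le> n"
proof -
  have w0: "w > 0" using w zero_notin by (cases w) auto
  have wN: "w < N" using w AN' by blast
  have j: "j < n" by (rule layer_lt[OF p w0 _ w(2)]) (use wN NN in simp)
  define m where "m = 1 + p ^ (n - j)"
  have pd: "p dvd p ^ (n - j)" using j by (intro dvd_power) auto
  have "\<not> p dvd m"
  proof
    assume "p dvd m" then have "p dvd m - p ^ (n - j)" using pd by (intro dvd_diff_nat)
    then have "p dvd 1" unfolding m_def by simp
    then show False using p by simp
  qed
  then have "coprime p m" by (rule prime_imp_coprime[OF p])
  then have "coprime m p" by (simp add: coprime_commute)
  then have cm: "coprime m N" using NN by simp
  have "N dvd p ^ (n - j) * w"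
  proof -
    have "p ^ n = p ^ (n - j) * p ^ j" using j by (simp add: power_add[symmetric])
    then show ?thesis using w(2) NN by (simp add: mult_dvd_mono)
  qed
  then obtain t where t: "p ^ (n - j) * w = N * t" by (elim dvdE)
  have "m * w = w + N * t" unfolding m_def using t by (simp add: algebra_simps)
  then have "(m * w) mod N = w mod N" by simp
  then have "(m * w) mod N \<in> A" using wN w by simp
  then have "[m = 1] (mod p ^ b)" using H1[OF A y b uv cm w(1)] by simp
  then have "int (p ^ b) dvd int m - int 1" by (simp only: cong_nat_dvd)
  then have "int (p ^ b) dvd int (p ^ (n - j))" unfolding m_def by simp
  then have "p ^ b dvd p ^ (n - j)" by (simp only: int_dvd_int_iff)
  then have "b \<le> n - j" using p by (simp add: dvd_power_iff_le prime_ge_2_nat)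
  then show ?thesis using j by simp
qed

lemma A_layer_set:
  assumes w: "w \<in> A" "p ^ j dvd w" "\<not> p ^ Suc j dvd w"
  shows "A \<inter> layer p N j = {z. z < N \<and> [z = w] (mod p ^ (j + b))}"
proof -
  have jb: "j + b \<le> n" by (rule A_layer_bound[OF w])
  have j: "j < n" using jb b by simp
  have wN: "w < N" using w AN' by blast
  obtain w' where w': "w = p ^ j * w'" "coprime w' p" using layer_decomp[OF p w(2,3)] by blast
  have dvdN: "p ^ (j + b) dvd N" unfolding NN using jb by (intro le_imp_power_dvd) simp
  show ?thesis
  proof (intro equalityI subsetI)
    fix z assume z: "z \<in> A \<inter> layer p N j"
    then have zl: "z < N" "p ^ j dvd z" "\<not> p ^ Suc j dvd z" by (auto simp: layer_def)
    obtain z' where z': "z = p ^ j * z'" "coprime z' p" using layer_decomp[OF p zl(2,3)] by blast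
    note LU = layer_unit[OF p NN j z'(1) z'(2) zl(1) w'(1) w'(2)]
    define m where "m = z' * w' ^ (totient N - 1)"
    have mwz: "(m * w) mod N = z" using LU(2) unfolding m_def .
    then have "(m * w) mod N \<in> A" using z by simp
    then have "[m = 1] (mod p ^ b)" using H1[OF A y b uv _ w(1)] LU(1) unfolding m_def by blast
    then have c1: "[m * w = w] (mod p ^ (j + b))" using w(2) by (rule cong_mult_layer)
    have "[m * w = z] (mod N)" using mwz zl(1) by (simp add: cong_def)
    then have "[m * w = z] (mod p ^ (j + b))" using dvdN by (rule cong_dvd_modulus_nat)
    then have "[z = w] (mod p ^ (j + b))" using c1 by (metis cong_sym cong_trans)
    then show "z \<in> {z. z < N \<and> [z = w] (mod p ^ (j + b))}" using zl by simp
  next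
    fix z assume z: "z \<in> {z. z < N \<and> [z = w] (mod p ^ (j + b))}"
    then have zN: "z < N" and zc: "[z = w] (mod p ^ (j + b))" by auto
    have d1: "p ^ j dvd p ^ (j + b)" by (intro le_imp_power_dvd) simp
    have d2: "p ^ Suc j dvd p ^ (j + b)" using b by (intro le_imp_power_dvd) simp
    have zj: "p ^ j dvd z" by (rule cong_dvd_transfer[OF zc d1 w(2)])
    have zj1: "\<not> p ^ Suc j dvd z"
    proof
      assume "p ^ Suc j dvd z"
      then have "p ^ Suc j dvd w" using cong_dvd_transfer[OF cong_sym[OF zc] d2] by blast
      then show False using w by simp
    qed
    obtain z' where z': "z = p ^ j * z'" "coprime z' p" using layer_decomp[OF p zj zj1] by blast
    note LU = layer_unit[OF p NN j z'(1) z'(2) zN w'(1) w'(2)]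
    have "(z' * w' ^ (totient N - 1) * w) mod N \<in> A"
      by (rule H2[OF A y b uv LU(1) LU(3)[OF jb zc] w(1)])
    then have "z \<in> A" using LU(2) zN by simp
    then show "z \<in> A \<inter> layer p N j" using zN zj zj1 by (simp add: layer_def)
  qed
qed

lemma card_layer:
  assumes w: "w \<in> A" "p ^ j dvd w" "\<not> p ^ Suc j dvd w"
  shows "card (A \<inter> layer p N j) = p ^ (n - j - b)"
proof -
  have jb: "j + b \<le> n" by (rule A_layer_bound[OF w])
  have "N = p ^ (j + b) * p ^ (n - j - b)" using jb NN by (simp add: power_add[symmetric])
  then have "card {z. z < N \<and> [z = w] (mod p ^ (j + b))} = p ^ (n - j - b)"
    using card_residue_class[of "p ^ (j + b)" "p ^ (n - j - b)" w] p by (simp add: prime_gt_0_nat)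
  then show ?thesis using A_layer_set[OF w] by simp
qed

lemma only_layer_k:
  assumes z: "z \<in> A"
  shows "p ^ k dvd z \<and> \<not> p ^ Suc k dvd z"
proof -
  define J where "J = {j. j < n \<and> A \<inter> layer p N j \<noteq> {}}"
  have finJ: "finite J" unfolding J_def by simp
  have finA: "finite A" using AN' finite_subset by blast
  have lay: "\<exists>j<n. z \<in> layer p N j" if "z \<in> A" for z
  proof -
    have z0: "z > 0" using that zero_notin by (cases z) auto
    have zN: "z < N" using that AN' by blast
    obtain j where j: "p ^ j dvd z" "\<not> p ^ Suc j dvd z" using layer_exists[OF p z0] by blast
    have "j < n" by (rule layer_lt[OF p z0 _ j(1)]) (use zN NN in simp)
    then show ?thesis using j zN by (auto simp: layer_def)
  qed
  have Aeq: "A = (\<Union>j\<in>{..<n}. A \<inter> layer p N j)" using lay by blast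
  have "card A = (\<Sum>j<n. card (A \<inter> layer p N j))"
  proof -
    have cU: "card (\<Union>j\<in>{..<n}. A \<inter> layer p N j) = (\<Sum>j<n. card (A \<inter> layer p N j))"
    proof (rule card_UN_disjoint)
      show "\<forall>i\<in>{..<n}. finite (A \<inter> layer p N i)" using finA by simp
      show "\<forall>i\<in>{..<n}. \<forall>j\<in>{..<n}. i \<noteq> j \<longrightarrow> A \<inter> layer p N i \<inter> (A \<inter> layer p N j) = {}"
      proof (intro ballI impI equalityI subsetI)
        fix i j z assume ij: "i \<noteq> j" and z: "z \<in> A \<inter> layer p N i \<inter> (A \<inter> layer p N j)"
        then have zi: "p ^ i dvd z" "\<not> p ^ Suc i dvd z" and zj: "p ^ j dvd z" "\<not> p ^ Suc j dvd z"
          by (auto simp: layer_def)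
        have "i = j" by (rule layer_unique[OF zi zj p])
        then show "z \<in> {}" using ij by simp
      qed simp
    qed simp
    have "card A = card (\<Union>j\<in>{..<n}. A \<inter> layer p N j)" using Aeq by (rule arg_cong)
    then show ?thesis using cU by (rule trans)
  qed
  also have "\<dots> = (\<Sum>j<n. if j \<in> J then p ^ (n - j - b) else 0)"
  proof (rule sum.cong[OF refl])
    fix j assume "j \<in> {..<n}"
    show "card (A \<inter> layer p N j) = (if j \<in> J then p ^ (n - j - b) else 0)"
    proof (cases "j \<in> J")
      case True
      then obtain w where "w \<in> A \<inter> layer p N j" unfolding J_def by blast
      then have "w \<in> A" "p ^ j dvd w" "\<not> p ^ Suc j dvd w" by (auto simp: layer_def)
      then show ?thesis using card_layer True by simp
    next
      case False
      then have "A \<inter> layer p N j = {}" using \<open>j \<in> {..<n}\<close> unfolding J_def by blast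
      then show ?thesis using False by simp
    qed
  qed
  also have "\<dots> = (\<Sum>j\<in>J. p ^ (n - j - b))"
    by (subst sum.If_cases) (auto simp: J_def intro!: sum.cong)
  finally have s: "card A = (\<Sum>j\<in>J. p ^ (n - j - b))" .
  obtain e where e: "card A = p ^ e" using cp A unfolding cond_p_def by blast
  have kJ: "k \<in> J"
  proof -
    have "y < N" using y AN' by blast
    then have "y \<in> A \<inter> layer p N k" using y ylay by (simp add: layer_def)
    then show ?thesis using k unfolding J_def by blast
  qed
  have Jb: "\<forall>j\<in>J. j + b \<le> n"
  proof
    fix j assume "j \<in> J"
    then obtain w where "w \<in> A \<inter> layer p N j" unfolding J_def by blast
    then show "j + b \<le> n" using A_layer_bound by (auto simp: layer_def)
  qed
  have "J = {Max J}" by (rule distinct_pow_sum[OF p finJ _ Jb, of e]) (use kJ s e in auto)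
  then have Jk: "J = {k}" using kJ by (metis singletonD)
  obtain j where j: "j < n" "z \<in> layer p N j" using lay[OF z] by blast
  then have "j \<in> J" using z unfolding J_def by blast
  then have "j = k" using Jk by simp
  then show ?thesis using j by (simp add: layer_def)
qed

lemma coset:
  assumes z: "z \<in> A" shows "[z = y] (mod p ^ (k + b))"
proof -
  have "p ^ k dvd z \<and> \<not> p ^ Suc k dvd z" by (rule only_layer_k[OF z])
  moreover have "z < N" using z AN' by blast
  ultimately have "z \<in> A \<inter> layer p N k" using z by (simp add: layer_def)
  then show ?thesis using A_layer_set[OF y ylay] by simp
qed

end


lemma ind_nonneg: "0 \<le> ind A x" by (simp add: ind_def)

lemma cpow_nonneg: "cpow N (ind A) i z \<ge> 0"
proof (induction i arbitrary: z)
  case 0 then show ?case by (simp add: ind_def)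
next
  case (Suc i) then show ?case unfolding cpow.simps cconv_def
    using ind_nonneg by (intro sum_nonneg mult_nonneg_nonneg) auto
qed

lemma cpow_support:
  fixes M :: nat
  assumes AN: "A \<subseteq> {..<N}" and MN: "M dvd N" and cos: "\<And>z. z \<in> A \<Longrightarrow> [z = y] (mod M)"
  shows "z < N \<Longrightarrow> cpow N (ind A) i z \<noteq> 0 \<Longrightarrow> [z = i * y] (mod M)"
proof (induction i arbitrary: z)
  case 0 then show ?case by (simp add: ind_def split: if_splits)
next
  case (Suc i)
  have "(\<Sum>w<N. ind A w * cpow N (ind A) i ((z + N - w) mod N)) \<noteq> 0" using Suc.prems by (simp add: cconv_def)
  then obtain w where w: "w < N" "ind A w * cpow N (ind A) i ((z + N - w) mod N) \<noteq> 0"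
    by (meson lessThan_iff sum.neutral)
  then have wA: "w \<in> A" by (auto simp: ind_def split: if_splits)
  have "cpow N (ind A) i ((z + N - w) mod N) \<noteq> 0" using w by auto
  then have c1: "[(z + N - w) mod N = i * y] (mod M)" by (intro Suc.IH) (use w in simp)
  have "[(z + N - w) mod N = z + N - w] (mod M)" using MN by (metis cong_dvd_modulus_nat cong_mod_left cong_refl)
  then have c2: "[z + N - w = i * y] (mod M)" using c1 by (metis cong_sym cong_trans)
  have c3: "[w = y] (mod M)" by (rule cos[OF wA])
  have "[z + N - w + w = i * y + y] (mod M)" by (rule cong_add[OF c2 c3])
  moreover have "z + N - w + w = z + N" using w by simp
  ultimately have c4: "[z + N = i * y + y] (mod M)" by simp
  have "[z + N = z + 0] (mod M)" using MN by (intro cong_add) (auto simp: cong_0_iff)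
  then have "[z = i * y + y] (mod M)" using c4 by (metis cong_sym cong_trans add_0_right)
  then show ?case by (simp add: add.commute)
qed

lemma cpow_pos:
  assumes yA: "y \<in> A" and yN: "y < N" and N0: "N > 0"
  shows "cpow N (ind A) i ((i * y) mod N) > 0"
proof (induction i)
  case 0 then show ?case using N0 by (simp add: ind_def)
next
  case (Suc i)
  have eq: "((Suc i * y) mod N + N - y) mod N = (i * y) mod N"
  proof -
    have "(Suc i * y) mod N + N - y = (Suc i * y) mod N + (N - y)" using yN by simp
    then have "((Suc i * y) mod N + N - y) mod N = (Suc i * y + (N - y)) mod N" by (simp add: mod_add_left_eq)
    also have "Suc i * y + (N - y) = i * y + N" using yN by simp
    finally show ?thesis by simp
  qed
  have iy: "ind A y = 1" using yA by (simp add: ind_def)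
  have "0 < ind A y * cpow N (ind A) i (((Suc i * y) mod N + N - y) mod N)"
    unfolding eq iy using Suc by simp
  also have "\<dots> \<le> (\<Sum>w<N. ind A w * cpow N (ind A) i (((Suc i * y) mod N + N - w) mod N))"
    by (rule member_le_sum) (use yN cpow_nonneg in \<open>auto simp: ind_def\<close>)
  finally show ?case by (simp add: cconv_def)
qed

lemma final_step:
  assumes A: "A \<in> P" and y: "y \<in> A" and b: "1 \<le> b" "b \<le> n"
    and uv: "uval p n \<alpha> A y = totient (p ^ b)"
    and k: "k < n" and ylay: "p ^ k dvd y" "\<not> p ^ Suc k dvd y"
    and b2: "2 \<le> b" and kb: "k + b \<le> n"
    and yB: "coprime x p" "y = (p ^ k * x) mod N"
    and A': "A' \<in> P" and y': "y' \<in> A'" and y'B: "coprime x' p" "y' = (p ^ Suc k * x') mod N"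
    and c: "1 \<le> c" "c \<le> n" and uv': "uval p n \<alpha> A' y' = totient (p ^ c)"
  shows "b \<le> c + 1"
proof -
  define M where "M = p ^ (k + b)"
  have MN: "M dvd N" unfolding M_def NN using kb by (intro le_imp_power_dvd) simp
  have AN: "A \<subseteq> {..<N}" by (rule partition_sub[OF PP A])
  have yN: "y < N" using AN y by blast
  have N0: "N > 0" using N1 by simp
  have cos: "\<And>z. z \<in> A \<Longrightarrow> [z = y] (mod M)" unfolding M_def by (rule coset[OF A y b uv k ylay])
  define Y where "Y = (p * y) mod N"
  have YN: "Y < N" using N0 by (simp add: Y_def)
  obtain A'' where A'': "A'' \<in> P" "Y \<in> A''" using partition_cover[OF PP YN] by blast
  have gpos: "cpow N (ind A) p Y > 0" unfolding Y_def using cpow_pos[OF y yN N0, of p] by simp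
  have A''c: "[z = p * y] (mod M)" if z: "z \<in> A''" for z
  proof -
    have zN: "z < N" using partition_sub[OF PP A''(1)] z by blast
    have "cpow N (ind A) p z = cpow N (ind A) p Y"
      by (rule zspan_const[OF PP cpow_zspan[OF U A] A''(1) z A''(2)])
    then have "cpow N (ind A) p z \<noteq> 0" using gpos by simp
    then show ?thesis using cpow_support[OF AN MN cos zN, of p] by blast
  qed
  define T where "T = totient N"
  have T0: "T > 0" using N1 by (simp add: T_def)
  have cxN: "coprime x N" using yB NN by simp
  have cx'N: "coprime x' N" using y'B NN by simp
  define v where "v = x' * x ^ (T - 1)"
  have cv: "coprime v N" unfolding v_def using cxN cx'N by simp
  have xT: "[x ^ T = 1] (mod N)" unfolding T_def by (rule euler_theorem[OF cxN])
  have xT': "x ^ (T - 1) * x = x ^ T" using T0 by (metis Suc_diff_1 power_Suc2)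
  have Ycong: "[Y = p ^ Suc k * x] (mod N)"
  proof -
    have "[y = p ^ k * x] (mod N)" using yB by (simp add: cong_def)
    then have "[p * y = p * (p ^ k * x)] (mod N)" by (rule cong_scalar_left)
    then show ?thesis unfolding Y_def by (simp add: cong_def mult.assoc)
  qed
  have vY: "(v * Y) mod N = y'"
  proof -
    have "[v * Y = v * (p ^ Suc k * x)] (mod N)" using Ycong by (rule cong_scalar_left)
    moreover have "v * (p ^ Suc k * x) = (p ^ Suc k * x') * x ^ T"
      unfolding v_def using xT' by (simp add: ac_simps)
    moreover have "[(p ^ Suc k * x') * x ^ T = (p ^ Suc k * x') * 1] (mod N)" using xT by (rule cong_scalar_left)
    ultimately have "[v * Y = p ^ Suc k * x'] (mod N)" by (metis cong_trans mult_1_right)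
    then show ?thesis using y'B by (simp add: cong_def)
  qed
  have "mulset N v A'' \<in> P" by (rule multiplier[OF U N1 A''(1) cv])
  moreover have "y' \<in> mulset N v A''" using A''(2) vY unfolding mulset_def by blast
  ultimately have A'eq: "mulset N v A'' = A'" using partition_disj[OF PP _ A' _ y'] by blast
  define d' where "d' = totient (p ^ c)"
  have "(\<alpha> ^ d' * y') mod N \<in> A'" using uv_props(2)[OF A' y' c uv'] by (simp add: d'_def)
  then obtain z where z: "z \<in> A''" "(\<alpha> ^ d' * y') mod N = (v * z) mod N"
    unfolding A'eq[symmetric] mulset_def by blast
  define W where "W = (\<alpha> ^ d' * Y) mod N"
  have "(v * W) mod N = (\<alpha> ^ d' * y') mod N"
  proof -
    have "(v * W) mod N = (v * (\<alpha> ^ d' * Y)) mod N" unfolding W_def by (simp add: mod_mult_right_eq)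
    also have "v * (\<alpha> ^ d' * Y) = \<alpha> ^ d' * (v * Y)" by (simp add: ac_simps)
    also have "(\<alpha> ^ d' * (v * Y)) mod N = (\<alpha> ^ d' * ((v * Y) mod N)) mod N" by (simp add: mod_mult_right_eq)
    finally show ?thesis using vY by simp
  qed
  then have "(v * z) mod N = (v * W) mod N" using z by simp
  moreover have "z < N" using partition_sub[OF PP A''(1)] z by blast
  moreover have "W < N" using N0 by (simp add: W_def)
  ultimately have "z = W" using mod_mult_inj[OF cv] by blast
  then have "[W = p * y] (mod M)" using A''c z by blast
  moreover have "[W = \<alpha> ^ d' * (p ^ Suc k * x)] (mod M)"
  proof -
    have "[\<alpha> ^ d' * Y = \<alpha> ^ d' * (p ^ Suc k * x)] (mod N)" using Ycong by (rule cong_scalar_left)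
    then have "[W = \<alpha> ^ d' * (p ^ Suc k * x)] (mod N)" unfolding W_def by (simp add: cong_def)
    then show ?thesis using MN by (rule cong_dvd_modulus_nat)
  qed
  moreover have "[p * y = p ^ Suc k * x] (mod M)"
  proof -
    have "[Y = p ^ Suc k * x] (mod M)" using Ycong MN by (rule cong_dvd_modulus_nat)
    moreover have "[Y = p * y] (mod M)" unfolding Y_def using MN by (metis cong_dvd_modulus_nat cong_mod_left cong_refl)
    ultimately show ?thesis by (metis cong_sym cong_trans)
  qed
  ultimately have "[p ^ Suc k * (\<alpha> ^ d' * x) = p ^ Suc k * x] (mod M)"
    by (metis (no_types, lifting) cong_sym cong_trans mult.left_commute)
  moreover have "M = p ^ (Suc k + (b - 1))" unfolding M_def using b2 by simp
  ultimately have "[\<alpha> ^ d' * x = x] (mod p ^ (b - 1))" using cong_cancel_pow[OF p] by metis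
  then have "[\<alpha> ^ d' * x = 1 * x] (mod p ^ (b - 1))" by simp
  moreover have "coprime x (p ^ (b - 1))" using yB by simp
  ultimately have "[\<alpha> ^ d' = 1] (mod p ^ (b - 1))" using cong_mult_rcancel_nat by blast
  then have "totient (p ^ (b - 1)) dvd d'" using primroot_ord[OF p _ _ _] r NN b b2 by simp
  then have "p ^ (b - 1 - 1) * (p - 1) dvd p ^ (c - 1) * (p - 1)"
    unfolding d'_def using totient_pp[OF p, of "b - 1"] totient_pp[OF p c(1)] b2 by simp
  moreover have "p - 1 > 0" using prime_gt_1_nat[OF p] by simp
  ultimately have "p ^ (b - 1 - 1) dvd p ^ (c - 1)" by simp
  then have "b - 1 - 1 \<le> c - 1" using p by (simp add: dvd_power_iff_le prime_ge_2_nat)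
  then show ?thesis using c b2 by simp
qed

end



theorem mainTheorem13:
  fixes p n \<alpha> :: nat and P :: "nat set set" and b :: "nat \<Rightarrow> nat"
  assumes "prime p" and "odd p" and "1 \<le> n"
    and "fusion_partition (p ^ n) P" and "cond_p p P"
    and "residue_primroot (p ^ n) \<alpha>"
    and "\<forall>k<n. 1 \<le> b k \<and> b k \<le> n - k \<and>
           (\<exists>A\<in>Pset p n P k. \<exists>y\<in>A \<inter> Bset p n k. uval p n \<alpha> A y = totient (p ^ b k))"
    and "b n = 0"
  shows "\<forall>k<n. b (k + 1) + k + 1 \<ge> b k + k"
proof (intro allI impI)
  fix k assume k: "k < n"
  have p: "prime p" and n: "1 \<le> n" and cp: "cond_p p P" and r: "residue_primroot (p ^ n) \<alpha>"
    using assms by auto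
  have U: "unital_partition (p ^ n) P" using assms(4) unfolding fusion_partition_def by simp
  have H: "\<And>k. k < n \<Longrightarrow> 1 \<le> b k \<and> b k \<le> n - k \<and>
           (\<exists>A\<in>Pset p n P k. \<exists>y\<in>A \<inter> Bset p n k. uval p n \<alpha> A y = totient (p ^ b k))"
    using assms(7) by blast
  show "b (k + 1) + k + 1 \<ge> b k + k"
  proof (cases "k + 1 = n")
    case True
    then show ?thesis using H[OF k] assms(8) by auto
  next
    case False
    then have k1: "k + 1 < n" using k by simp
    show ?thesis
    proof (cases "b k \<le> 1")
      case True then show ?thesis by simp
    next
      case False
      then have b2: "2 \<le> b k" by simp
      obtain A y where A: "A \<in> Pset p n P k" "y \<in> A \<inter> Bset p n k" "uval p n \<alpha> A y = totient (p ^ b k)"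
        and bk: "1 \<le> b k" "b k \<le> n - k" using H[OF k] by blast
      obtain A' y' where A': "A' \<in> Pset p n P (k + 1)" "y' \<in> A' \<inter> Bset p n (k + 1)"
          "uval p n \<alpha> A' y' = totient (p ^ b (k + 1))"
        and bk1: "1 \<le> b (k + 1)" "b (k + 1) \<le> n - (k + 1)" using H[OF k1] by blast
      have AP: "A \<in> P" "A' \<in> P" using A(1) A'(1) unfolding Pset_def by auto
      have yB: "y \<in> Bset p n k" and y'B: "y' \<in> Bset p n (Suc k)" using A(2) A'(2) by auto
      note BL = Bset_layer[OF p k yB]
      note BL' = Bset_layer[OF p k1[simplified] y'B]
      obtain x where x: "coprime x p" "y = (p ^ k * x) mod p ^ n" using BL(4) by blast
      obtain x' where x': "coprime x' p" "y' = (p ^ Suc k * x') mod p ^ n" using BL'(4) by blast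
      have "b k \<le> b (k + 1) + 1"
        by (rule final_step[OF p n refl U cp r AP(1) _ bk(1) _ A(3) k BL(2) BL(3) b2 _ x AP(2) _ x'(1) x'(2)
              bk1(1) _ ])
          (use A A' bk bk1 in auto)
      then show ?thesis by simp
    qed
  qed
qed

end
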